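(* Let $n$ be even and $f:\mathbb{F}_{2^n}\to\mathbb{F}_{2^n}$ be a map with exactly $t$ bent component functions. Then $N(f)\geq t+2^n$ and \[|\mathrm{Im}(f)|\leq 2^n-\tfrac12\left(\sqrt{4t+1}-1\right).\]
   Context: $\mathrm{Tr}$ is the absolute trace and $W_f(b,a)=\sum_{x}(-1)^{\mathrm{Tr}(bf(x)+ax)}$. The component functions of $f$ are $x\mapsto\mathrm{Tr}(\lambda f(x))$, $\lambda\neq0$; such a component is bent if $|W_f(\lambda,a)|=2^{n/2}$ for all $a\in\mathbb{F}_{2^n}$. $N(f)$ is the number of pairs $(x,y)$ with $f(x)=f(y)$. *)

theory Defs
  imports Complex_Main
begin

definition abs_trace :: "nat \<Rightarrow> 'a::field \<Rightarrow> 'a" where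
  "abs_trace n x = (\<Sum>i<n. x ^ (2 ^ i))"

text \<open>(-1)^Tr(z), as a real number (Tr(z) lies in the prime field {0,1}).\<close>
definition trace_sign :: "nat \<Rightarrow> 'a::field \<Rightarrow> real" where
  "trace_sign n z = (if abs_trace n z = 0 then 1 else -1)"

definition walsh :: "nat \<Rightarrow> ('a::{finite,field} \<Rightarrow> 'a) \<Rightarrow> 'a \<Rightarrow> 'a \<Rightarrow> real" where
  "walsh n f b a = (\<Sum>x\<in>UNIV. trace_sign n (b * f x + a * x))"

text \<open>The component x |-> Tr(lam f(x)), lam nonzero, is bent.\<close>
definition bent_component :: "nat \<Rightarrow> ('a::{finite,field} \<Rightarrow> 'a) \<Rightarrow> 'a \<Rightarrow> bool" where
  "bent_component n f lam \<longleftrightarrow> lam \<noteq> 0 \<and> (\<forall>a. \<bar>walsh n f lam a\<bar> = 2 powr (real n / 2))"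

definition collision_count :: "('a::finite \<Rightarrow> 'b) \<Rightarrow> nat" where
  "collision_count f = card {(x, y). f x = f y}"

end

theory Submission imports Defs "HOL-Computational_Algebra.Polynomial"
begin

lemma inv_even:
  "finite A \<Longrightarrow> \<forall>x\<in>A. g x \<in> A \<and> g x \<noteq> x \<and> g (g x) = x \<Longrightarrow> even (card A)"
proof (induction "card A" arbitrary: A rule: less_induct)
  case (less A)
  show ?case
  proof (cases "A = {}")
    case True then show ?thesis by simp
  next
    case False
    then obtain x where x: "x \<in> A" by blast
    define A' where "A' = A - {x, g x}"
    have gx: "g x \<in> A" "g x \<noteq> x" using x less.prems(2) by auto
    have "card {x, g x} \<le> card A" by (rule card_mono) (use x gx less.prems(1) in auto)
    then have c: "card A = card A' + 2" unfolding A'_def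
      using x gx less.prems(1) by (simp add: card_Diff_subset)
    have "\<forall>y\<in>A'. g y \<in> A' \<and> g y \<noteq> y \<and> g (g y) = y"
    proof
      fix y assume y: "y \<in> A'"
      then have y1: "y \<in> A" "y \<noteq> x" "y \<noteq> g x" unfolding A'_def by auto
      have p: "g y \<in> A" "g y \<noteq> y" "g (g y) = y" "g (g x) = x" using less.prems(2) y1(1) x by auto
      have "g y \<noteq> x" using p y1 by metis
      moreover have "g y \<noteq> g x" using p y1 by metis
      ultimately show "g y \<in> A' \<and> g y \<noteq> y \<and> g (g y) = y" using p unfolding A'_def by auto
    qed
    then have "even (card A')" using less c by (simp add: A'_def)
    then show ?thesis using c by simp
  qed
qed

lemma card_ge2: "card (UNIV::'a::{finite,field} set) \<ge> 2"
proof -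
  have "{0, 1::'a} \<subseteq> UNIV" by simp
  then have "card {0,1::'a} \<le> card (UNIV::'a set)" by (rule card_mono[OF finite_UNIV])
  then show ?thesis by simp
qed

lemma char2:
  assumes "card (UNIV::'a::{finite,field} set) = 2^n"
  shows "(1::'a) + 1 = 0"
proof (rule ccontr)
  assume ne: "(1::'a) + 1 \<noteq> 0"
  let ?A = "UNIV - {0::'a}"
  have h: "\<forall>x\<in>?A. - x \<in> ?A \<and> - x \<noteq> x \<and> - (- x) = x"
  proof
    fix x assume x: "x \<in> ?A"
    have "- x \<noteq> x"
    proof
      assume "- x = x"
      then have "(1+1) * x = 0" by (simp add: distrib_right)
      then show False using ne x by simp
    qed
    then show "- x \<in> ?A \<and> - x \<noteq> x \<and> - (- x) = x" using x by simp
  qed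
  have "even (card ?A)" by (rule inv_even[OF _ h]) simp
  moreover have "card ?A = 2^n - 1" using assms by (simp add: card_Diff_subset)
  moreover have "n \<noteq> 0" using card_ge2[where 'a='a] assms by (cases n) auto
  ultimately show False by simp
qed

lemma fermat:
  fixes x :: "'a::{finite,field}"
  shows "x ^ card (UNIV::'a set) = x"
proof (cases "x = 0")
  case True
  have "card (UNIV::'a set) \<noteq> 0" using card_ge2[where 'a='a] by simp
  then show ?thesis using True by (simp add: power_0_left)
next
  case False
  let ?A = "UNIV - {0::'a}"
  have bij: "bij_betw (\<lambda>y. x * y) ?A ?A"
  proof (rule bij_betw_imageI)
    show "inj_on (\<lambda>y. x * y) ?A" using False by (auto simp: inj_on_def)
    show "(\<lambda>y. x * y) ` ?A = ?A"
    proof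
      show "(\<lambda>y. x * y) ` ?A \<subseteq> ?A" using False by auto
      show "?A \<subseteq> (\<lambda>y. x * y) ` ?A"
      proof
        fix z assume "z \<in> ?A"
        then have "z / x \<in> ?A" "z = x * (z / x)" using False by auto
        then show "z \<in> (\<lambda>y. x * y) ` ?A" by blast
      qed
    qed
  qed
  have "prod (\<lambda>y. x * y) ?A = prod id ?A"
    using prod.reindex_bij_betw[OF bij, of id] by simp
  moreover have "prod (\<lambda>y. x * y) ?A = x ^ card ?A * prod id ?A"
    by (simp add: prod.distrib del: Diff_iff)
  moreover have "prod id ?A \<noteq> 0" by simp
  ultimately have "x ^ card ?A = 1" by simp
  moreover have "card ?A + 1 = card (UNIV::'a set)" using card_ge2[where 'a='a]
    by (simp add: card_Diff_subset)
  ultimately show ?thesis by (metis power_add power_one_right mult_1)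
qed

lemma frob:
  fixes x y :: "'a::comm_ring_1"
  assumes c2: "(1::'a) + 1 = 0"
  shows "(x+y)^(2^i) = x^(2^i) + y^(2^i)"
proof (induction i)
  case 0 then show ?case by simp
next
  case (Suc i)
  have e: "\<And>z::'a. z^(2^Suc i) = (z^(2^i))^2" by (simp only: power_Suc2 power_mult)
  have two: "2 * a * b = (0::'a)" for a b
  proof -
    have "2 * a * b = (1 + 1) * a * b" by (simp only: one_add_one)
    then show ?thesis using c2 by simp
  qed
  show ?case unfolding e Suc power2_sum two by simp
qed

lemma frob_sum:
  fixes g :: "'b \<Rightarrow> 'a::comm_ring_1"
  assumes c2: "(1::'a) + 1 = 0"
  shows "(sum g A)^(2^i) = sum (\<lambda>a. g a ^ 2^i) A"
proof (cases "finite A")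
  case True then show ?thesis
    by (induction A rule: finite_induct) (simp_all add: frob[OF c2] power_0_left)
next
  case False then show ?thesis by (simp add: power_0_left)
qed

lemma tr_add:
  fixes x y :: "'a::field"
  assumes c2: "(1::'a) + 1 = 0"
  shows "abs_trace n (x+y) = abs_trace n x + abs_trace n y"
  unfolding abs_trace_def frob[OF c2] by (simp add: sum.distrib)

lemma tr_sq:
  fixes x :: "'a::{finite,field}"
  assumes card: "card (UNIV::'a set) = 2^n"
  shows "abs_trace n x ^ 2 = abs_trace n x"
proof -
  have c2: "(1::'a) + 1 = 0" by (rule char2[OF card])
  have "abs_trace n x ^ 2 = abs_trace n x ^ (2^1)" by simp
  also have "\<dots> = (\<Sum>i<n. (x ^ 2^i) ^ (2^1))" unfolding abs_trace_def by (rule frob_sum[OF c2])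
  also have "\<dots> = (\<Sum>i<n. x ^ 2^(Suc i))" by (simp only: power_Suc2 power_mult power_one_right)
  finally have a: "abs_trace n x ^ 2 = (\<Sum>i<n. x ^ 2^(Suc i))" .
  have "(\<Sum>i<Suc n. x ^ 2^i) = x ^ 2^0 + (\<Sum>i<n. x ^ 2^(Suc i))" by (rule sum.lessThan_Suc_shift)
  moreover have "(\<Sum>i<Suc n. x ^ 2^i) = (\<Sum>i<n. x ^ 2^i) + x ^ 2^n" by simp
  moreover have "x ^ 2^n = x" using fermat[of x] card by simp
  ultimately have "(\<Sum>i<n. x ^ 2^(Suc i)) = (\<Sum>i<n. x ^ 2^i)" by simp
  then show ?thesis using a unfolding abs_trace_def by simp
qed

lemma tr01:
  fixes x :: "'a::{finite,field}"
  assumes card: "card (UNIV::'a set) = 2^n"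
  shows "abs_trace n x = 0 \<or> abs_trace n x = 1"
proof -
  let ?z = "abs_trace n x"
  have "?z * (?z - 1) = 0" using tr_sq[OF card, of x] by (simp add: algebra_simps power2_eq_square)
  then show ?thesis by simp
qed

lemma tr_nonzero:
  assumes card: "card (UNIV::'a::{finite,field} set) = 2^n"
  shows "\<exists>z::'a. abs_trace n z \<noteq> 0"
proof (rule ccontr)
  assume "\<not> (\<exists>z::'a. abs_trace n z \<noteq> 0)"
  then have allz: "\<And>z::'a. abs_trace n z = 0" by blast
  have n0: "n \<noteq> 0" using card_ge2[where 'a='a] card by (cases n) auto
  define p :: "'a poly" where "p = (\<Sum>i<n. monom 1 (2^i))"
  have pe: "poly p z = abs_trace n z" for z
    unfolding p_def abs_trace_def by (simp add: poly_sum poly_monom)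
  have "coeff p (2^(n-1)) = (\<Sum>i<n. if i = n - 1 then 1 else 0)"
    unfolding p_def coeff_sum by (intro sum.cong) auto
  also have "\<dots> = 1" using n0 by simp
  finally have "p \<noteq> 0" by auto
  then have r: "card {x. poly p x = 0} \<le> degree p" by (rule card_poly_roots_bound)
  have "degree p \<le> 2^(n-1)"
  proof (rule degree_le, intro allI impI)
    fix j :: nat assume j: "2^(n-1) < j"
    have "\<And>i. i < n \<Longrightarrow> (2::nat)^i \<le> 2^(n-1)" by (intro power_increasing) auto
    then show "coeff p j = 0" unfolding p_def coeff_sum using j by (intro sum.neutral) fastforce
  qed
  moreover have "{x. poly p x = 0} = (UNIV::'a set)" using pe allz by auto
  ultimately have "card (UNIV::'a set) \<le> 2^(n-1)" using r by simp
  moreover have "(2::nat)^(n-1) < 2^n" using n0 by simp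
  ultimately show False using card by linarith
qed

lemma tr_zero: "abs_trace n (0::'a::field) = 0"
  unfolding abs_trace_def by (simp add: power_0_left)

lemma ts_add:
  fixes u v :: "'a::{finite,field}"
  assumes card: "card (UNIV::'a set) = 2^n"
  shows "trace_sign n (u+v) = trace_sign n u * trace_sign n v"
proof -
  have c2: "(1::'a) + 1 = 0" by (rule char2[OF card])
  have a: "abs_trace n (u+v) = abs_trace n u + abs_trace n v" by (rule tr_add[OF c2])
  have o: "(1::'a) \<noteq> 0" by simp
  from tr01[OF card, of u] tr01[OF card, of v] show ?thesis
  proof (elim disjE)
    assume "abs_trace n u = 0" "abs_trace n v = 0" then show ?thesis
      unfolding trace_sign_def a by simp
  next
    assume "abs_trace n u = 0" "abs_trace n v = 1" then show ?thesis
      unfolding trace_sign_def a by simp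
  next
    assume "abs_trace n u = 1" "abs_trace n v = 0" then show ?thesis
      unfolding trace_sign_def a by simp
  next
    assume "abs_trace n u = 1" "abs_trace n v = 1" then show ?thesis
      unfolding trace_sign_def a by (simp only: c2) simp
  qed
qed

lemma ts_orth:
  fixes c :: "'a::{finite,field}"
  assumes card: "card (UNIV::'a set) = 2^n"
  shows "(\<Sum>b\<in>UNIV. trace_sign n (b*c)) = (if c = 0 then 2^n else 0)"
proof (cases "c = 0")
  case True
  then show ?thesis using card by (simp add: trace_sign_def tr_zero)
next
  case False
  obtain z :: 'a where z: "abs_trace n z \<noteq> 0" using tr_nonzero[OF card] by blast
  then have tz: "trace_sign n z = -1" by (simp add: trace_sign_def)
  define b0 where "b0 = z / c"
  have b0c: "b0 * c = z" using False by (simp add: b0_def)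
  define S where "S = (\<Sum>b\<in>UNIV. trace_sign n (b*c))"
  have "S = (\<Sum>b\<in>UNIV. trace_sign n ((b + b0)*c))" unfolding S_def
    by (rule sum.reindex_bij_witness[where i="\<lambda>b. b + b0" and j="\<lambda>b. b - b0"]) auto
  also have "\<dots> = (\<Sum>b\<in>UNIV. - trace_sign n (b*c))"
    by (intro sum.cong refl) (simp add: distrib_right b0c ts_add[OF card] tz)
  also have "\<dots> = - S" unfolding S_def by (simp add: sum_negf)
  finally have "S = 0" by simp
  then show ?thesis using False S_def by simp
qed

lemma char2_eq:
  fixes a b :: "'a::field"
  assumes c2: "(1::'a) + 1 = 0"
  shows "a + b = 0 \<longleftrightarrow> a = b"
proof -
  have "b + b = (1 + 1) * b" by (simp add: distrib_right)
  then have "b + b = 0" using c2 by simp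
  then have "b = - b" by (simp only: eq_neg_iff_add_eq_0)
  then have nb: "- b = b" by (rule sym)
  have "(a + b = 0) = (a = - b)" by (simp only: eq_neg_iff_add_eq_0)
  then show ?thesis by (simp only: nb)
qed

lemma sum_walsh_sq:
  fixes f :: "'a::{finite,field} \<Rightarrow> 'a"
  assumes card: "card (UNIV::'a set) = 2^n"
  shows "(\<Sum>b\<in>UNIV. (walsh n f b 0)^2) = 2^n * real (collision_count f)"
proof -
  have c2: "(1::'a) + 1 = 0" by (rule char2[OF card])
  have w: "(walsh n f b 0)^2 = (\<Sum>x\<in>UNIV. \<Sum>y\<in>UNIV. trace_sign n (b * (f x + f y)))" for b
    unfolding walsh_def power2_eq_square
    by (simp add: sum_product distrib_left ts_add[OF card])
  have "(\<Sum>b\<in>UNIV. (walsh n f b 0)^2)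
      = (\<Sum>b\<in>UNIV. \<Sum>x\<in>UNIV. \<Sum>y\<in>UNIV. trace_sign n (b * (f x + f y)))"
    unfolding w ..
  also have "\<dots> = (\<Sum>x\<in>UNIV. \<Sum>b\<in>UNIV. \<Sum>y\<in>UNIV. trace_sign n (b * (f x + f y)))"
    by (rule sum.swap)
  also have "\<dots> = (\<Sum>x\<in>UNIV. \<Sum>y\<in>UNIV. \<Sum>b\<in>UNIV. trace_sign n (b * (f x + f y)))"
    by (rule sum.cong[OF refl], rule sum.swap)
  also have "\<dots> = (\<Sum>x\<in>UNIV. \<Sum>y\<in>UNIV. if f x = f y then 2^n else 0)"
    by (intro sum.cong refl) (simp add: ts_orth[OF card] char2_eq[OF c2])
  also have "\<dots> = (\<Sum>p\<in>UNIV. if f (fst p) = f (snd p) then 2^n else 0)"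
    by (simp add: sum.cartesian_product split_beta)
  also have "\<dots> = (\<Sum>p\<in>{p\<in>UNIV. f (fst p) = f (snd p)}. 2^n)"
    by (rule sum.inter_filter[symmetric]) simp
  also have "{p\<in>UNIV. f (fst p) = f (snd p)} = {(x, y). f x = f y}" by auto
  finally show ?thesis unfolding collision_count_def by simp
qed

lemma sum_sq_le:
  fixes d :: "'b \<Rightarrow> real"
  assumes "finite A" "\<And>i. i \<in> A \<Longrightarrow> d i \<ge> 0"
  shows "(\<Sum>i\<in>A. (d i)^2) \<le> (\<Sum>i\<in>A. d i)^2"
proof -
  have "(\<Sum>i\<in>A. (d i)^2) = (\<Sum>i\<in>A. d i * d i)" by (simp add: power2_eq_square)
  also have "\<dots> \<le> (\<Sum>i\<in>A. \<Sum>j\<in>A. d i * d j)"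
  proof (rule sum_mono)
    fix i assume i: "i \<in> A"
    show "d i * d i \<le> (\<Sum>j\<in>A. d i * d j)"
      by (rule member_le_sum[where f="\<lambda>j. d i * d j", OF i]) (use assms i in auto)
  qed
  also have "\<dots> = (\<Sum>i\<in>A. d i)^2" by (simp add: power2_eq_square sum_product)
  finally show ?thesis .
qed

lemma fibers:
  fixes f :: "'a::finite \<Rightarrow> 'b"
  defines "k \<equiv> real (card (UNIV::'a set)) - real (card (range f))"
  shows "real (collision_count f) \<le> real (card (UNIV::'a set)) + k^2 + k"
proof -
  let ?R = "range f"
  define s where "s v = card (f -` {v})" for v
  have finR: "finite ?R" by simp
  have disj: "\<forall>i\<in>?R. \<forall>j\<in>?R. i \<noteq> j \<longrightarrow> f -` {i} \<inter> f -` {j} = {}" by auto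
  have "UNIV = (\<Union>v\<in>?R. f -` {v})" by auto
  then have b: "card (UNIV::'a set) = (\<Sum>v\<in>?R. s v)"
    unfolding s_def using card_UN_disjoint[OF finR _ disj] by simp
  have "{(x, y). f x = f y} = (\<Union>v\<in>?R. (f -` {v}) \<times> (f -` {v}))" by auto
  moreover have "card (\<Union>v\<in>?R. (f -` {v}) \<times> (f -` {v})) = (\<Sum>v\<in>?R. card ((f -` {v}) \<times> (f -` {v})))"
    by (rule card_UN_disjoint[OF finR]) auto
  ultimately have a: "collision_count f = (\<Sum>v\<in>?R. s v * s v)"
    unfolding collision_count_def s_def by (simp add: card_cartesian_product)
  have c: "s v \<ge> 1" if "v \<in> ?R" for v
  proof -
    from that obtain x where "f x = v" by blast
    then have "f -` {v} \<noteq> {}" by auto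
    then show ?thesis unfolding s_def by (simp add: Suc_le_eq card_gt_0_iff)
  qed
  define d where "d v = real (s v) - 1" for v
  have dn: "d v \<ge> 0" if "v \<in> ?R" for v using c[OF that] unfolding d_def by simp
  have D: "(\<Sum>v\<in>?R. d v) = k"
    unfolding d_def k_def b by (simp add: sum_subtractf)
  have "real (collision_count f) = (\<Sum>v\<in>?R. (d v)^2 + 2 * d v + 1)"
    unfolding a d_def by (simp add: power2_eq_square algebra_simps)
  also have "\<dots> = (\<Sum>v\<in>?R. (d v)^2) + 2 * k + real (card ?R)"
    by (simp add: sum.distrib sum_distrib_left[symmetric] D)
  also have "\<dots> \<le> k^2 + 2 * k + real (card ?R)"
  proof -
    have "(\<Sum>v\<in>?R. (d v)^2) \<le> (\<Sum>v\<in>?R. d v)^2" by (rule sum_sq_le[OF finR]) (rule dn)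
    then show ?thesis using D by simp
  qed
  finally show ?thesis unfolding k_def by simp
qed

theorem theorem7p4:
  fixes f :: "'a::{finite,field} \<Rightarrow> 'a" and n t :: nat
  assumes "card (UNIV :: 'a set) = 2 ^ n"
    and "even n"
    and "t = card {lam. bent_component n f lam}"
  shows "collision_count f \<ge> t + 2 ^ n \<and>
         real (card (range f)) \<le> 2 ^ n - (sqrt (4 * real t + 1) - 1) / 2"
proof -
  note card = assms(1)
  define B where "B = {lam. bent_component n f lam}"
  define W where "W b = walsh n f b 0" for b
  define N where "N = real (collision_count f)"
  have S: "(\<Sum>b\<in>UNIV. (W b)^2) = 2^n * N"
    unfolding W_def N_def by (rule sum_walsh_sq[OF card])
  have finB: "finite B" by simp
  have 0: "0 \<notin> B" unfolding B_def bent_component_def by simp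
  have "(\<Sum>b\<in>insert 0 B. (W b)^2) \<le> (\<Sum>b\<in>UNIV. (W b)^2)"
    by (rule sum_mono2) auto
  moreover have "(\<Sum>b\<in>insert 0 B. (W b)^2) = (W 0)^2 + (\<Sum>b\<in>B. (W b)^2)"
    using finB 0 by simp
  moreover have "W 0 = 2^n" unfolding W_def walsh_def using card
    by (simp add: trace_sign_def tr_zero)
  moreover have "(\<Sum>b\<in>B. (W b)^2) = real t * 2^n"
  proof -
    have "(W b)^2 = 2^n" if "b \<in> B" for b
    proof -
      have "\<bar>W b\<bar> = 2 powr (real n / 2)" using that unfolding B_def bent_component_def W_def by simp
      then have "(W b)^2 = (2 powr (real n / 2)) * (2 powr (real n / 2))"
        by (metis power2_abs power2_eq_square)
      also have "\<dots> = 2 powr (real n)" by (simp add: powr_add[symmetric])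
      also have "\<dots> = 2^n" by (simp add: powr_realpow)
      finally show ?thesis .
    qed
    then have "(\<Sum>b\<in>B. (W b)^2) = (\<Sum>b\<in>B. 2^n)" by (rule sum.cong[OF refl])
    then show ?thesis using assms(3) B_def by simp
  qed
  ultimately have "(2^n)^2 + real t * 2^n \<le> 2^n * N" using S by simp
  then have "2^n * (2^n + real t) \<le> 2^n * N" by (simp add: algebra_simps power2_eq_square)
  then have N1: "2^n + real t \<le> N" by simp
  then have "real (t + 2 ^ n) \<le> real (collision_count f)" unfolding N_def by simp
  then have part1: "collision_count f \<ge> t + 2 ^ n" by (simp only: of_nat_le_iff)
  define k where "k = real (card (UNIV::'a set)) - real (card (range f))"
  have "card (range f) \<le> card (UNIV::'a set)" by (rule card_image_le) simp
  then have k0: "k \<ge> 0" unfolding k_def by simp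
  have "N \<le> 2^n + k^2 + k" unfolding N_def k_def using fibers[of f] card by simp
  then have "real t \<le> k^2 + k" using N1 by simp
  then have "4 * real t + 1 \<le> (2 * k + 1)^2" by (simp add: power2_eq_square algebra_simps)
  then have "sqrt (4 * real t + 1) \<le> sqrt ((2 * k + 1)^2)" by (rule real_sqrt_le_mono)
  also have "\<dots> = 2 * k + 1" using k0 by simp
  finally have "(sqrt (4 * real t + 1) - 1) / 2 \<le> k" by simp
  then have part2: "real (card (range f)) \<le> 2 ^ n - (sqrt (4 * real t + 1) - 1) / 2"
  proof -
    have "k = 2^n - real (card (range f))" unfolding k_def using card by simp
    then show ?thesis using \<open>(sqrt (4 * real t + 1) - 1) / 2 \<le> k\<close> by linarith
  qed
  show ?thesis using part1 part2 by simp
qed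

end
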